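(* Let $K\neq0$ and let $(\mathcal M,\rho)$ be a metric space such that $\operatorname{diam}(\mathcal M)\le\pi/(2\sqrt K)$ when $K>0$, satisfying the one-sided four point $\operatorname{cosq}_K$ condition. Let $\mathcal L$ be a shortest joining $A$ to $B$ and let $(\mathcal L_n)_{n\ge1}$ be shortests joining $A_n$ to $B_n$, with $A_n\to A$ and $B_n\to B$. Let $\mathfrak g_r$ be the reduced parametrization of $\mathcal L$ relative to $A$ and $\mathfrak g_{r,n}$ that of $\mathcal L_n$ relative to $A_n$. Then $\mathfrak g_{r,n}\to\mathfrak g_r$ uniformly on $[0,1]$.
   Context: A shortest joining $P$ to $Q$ is a rectifiable curve from $P$ to $Q$ of length $\rho(P,Q)$. If $\mathcal L$ is a shortest of length $l$ from $A$, its reduced parametrization relative to $A$ is $\mathfrak g_r:[0,1]\to\mathcal M$, $\mathfrak g_r(t)=$ the point of $\mathcal L$ such that the arc of $\mathcal L$ from $A$ to it has length $tl$. Let $\kappa=\sqrt{|K|}$. For $A\neq P$, $B\neq Q$ (with $\rho(A,P),\rho(B,Q),\rho(A,B)<\pi/\sqrt K$ if $K>0$) put $x=\rho(A,P)$, $y=\rho(B,Q)$, $a=\rho(A,B)$, $b=\rho(P,Q)$, $d=\rho(P,B)$, $f=\rho(A,Q)$; for $K>0$ $$\operatorname{cosq}_K(\overrightarrow{AP},\overrightarrow{BQ})=\frac{\cos\kappa b+\cos\kappa x\cos\kappa y}{\sin\kappa x\sin\kappa y}-\frac{(\cos\kappa x+\cos\kappa d)(\cos\kappa y+\cos\kappa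 f)}{(1+\cos\kappa a)\sin\kappa x\sin\kappa y},$$ and for $K<0$ $$\operatorname{cosq}_K(\overrightarrow{AP},\overrightarrow{BQ})=\frac{(\cosh\kappa x+\cosh\kappa d)(\cosh\kappa y+\cosh\kappa f)}{(1+\cosh\kappa a)\sinh\kappa x\sinh\kappa y}-\frac{\cosh\kappa b+\cosh\kappa x\cosh\kappa y}{\sinh\kappa x\sinh\kappa y}.$$ Upper/lower four point $\operatorname{cosq}_K$ condition: $\operatorname{cosq}_K\le1$ / $\ge-1$ for all such quadruples; one-sided: at least one of the two holds. *)

theory Defs
  imports "HOL-Analysis.Analysis"
begin

definition partition_sums :: "(real \<Rightarrow> 'a::metric_space) \<Rightarrow> real \<Rightarrow> real \<Rightarrow> real set" where
  "partition_sums \<gamma> a b =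
     {(\<Sum>i<n. dist (\<gamma> (t i)) (\<gamma> (t (Suc i)))) | t n.
        t 0 = a \<and> t n = b \<and> (\<forall>i<n. t i \<le> t (Suc i))}"

definition curve_length :: "(real \<Rightarrow> 'a::metric_space) \<Rightarrow> real \<Rightarrow> real \<Rightarrow> real" where
  "curve_length \<gamma> a b = Sup (partition_sums \<gamma> a b)"

definition rectifiable_curve :: "(real \<Rightarrow> 'a::metric_space) \<Rightarrow> bool" where
  "rectifiable_curve \<gamma> \<longleftrightarrow> continuous_on {0..1} \<gamma> \<and> bdd_above (partition_sums \<gamma> 0 1)"

definition shortest :: "(real \<Rightarrow> 'a::metric_space) \<Rightarrow> 'a \<Rightarrow> 'a \<Rightarrow> bool" where
  "shortest \<gamma> P Q \<longleftrightarrow> rectifiable_curve \<gamma> \<and> \<gamma> 0 = P \<and> \<gamma> 1 = Q \<and> curve_length \<gamma> 0 1 = dist P Q"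

definition reduced_param :: "(real \<Rightarrow> 'a::metric_space) \<Rightarrow> real \<Rightarrow> 'a" where
  "reduced_param \<gamma> t = \<gamma> (SOME s. s \<in> {0..1} \<and> curve_length \<gamma> 0 s = t * curve_length \<gamma> 0 1)"

definition cosq :: "real \<Rightarrow> 'a::metric_space \<Rightarrow> 'a \<Rightarrow> 'a \<Rightarrow> 'a \<Rightarrow> real" where
  "cosq K A P B Q =
    (let k = sqrt \<bar>K\<bar>; x = dist A P; y = dist B Q; a = dist A B; b = dist P Q;
         d = dist P B; f = dist A Q in
     if K > 0 then
       (cos (k*b) + cos (k*x) * cos (k*y)) / (sin (k*x) * sin (k*y))
       - (cos (k*x) + cos (k*d)) * (cos (k*y) + cos (k*f)) / ((1 + cos (k*a)) * sin (k*x) * sin (k*y))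
     else
       (cosh (k*x) + cosh (k*d)) * (cosh (k*y) + cosh (k*f)) / ((1 + cosh (k*a)) * sinh (k*x) * sinh (k*y))
       - (cosh (k*b) + cosh (k*x) * cosh (k*y)) / (sinh (k*x) * sinh (k*y)))"

definition admissible_quad :: "real \<Rightarrow> 'a::metric_space \<Rightarrow> 'a \<Rightarrow> 'a \<Rightarrow> 'a \<Rightarrow> bool" where
  "admissible_quad K A P B Q \<longleftrightarrow> A \<noteq> P \<and> B \<noteq> Q \<and>
     (K > 0 \<longrightarrow> dist A P < pi / sqrt K \<and> dist B Q < pi / sqrt K \<and> dist A B < pi / sqrt K)"

definition upper_cosq_cond :: "real \<Rightarrow> 'a::metric_space itself \<Rightarrow> bool" where
  "upper_cosq_cond K _ \<longleftrightarrow> (\<forall>A P B Q :: 'a. admissible_quad K A P B Q \<longrightarrow> cosq K A P B Q \<le> 1)"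

definition lower_cosq_cond :: "real \<Rightarrow> 'a::metric_space itself \<Rightarrow> bool" where
  "lower_cosq_cond K _ \<longleftrightarrow> (\<forall>A P B Q :: 'a. admissible_quad K A P B Q \<longrightarrow> cosq K A P B Q \<ge> -1)"

definition one_sided_cosq_cond :: "real \<Rightarrow> 'a::metric_space itself \<Rightarrow> bool" where
  "one_sided_cosq_cond K T \<longleftrightarrow> upper_cosq_cond K T \<or> lower_cosq_cond K T"

end

theory Submission
  imports Defs "HOL-Library.Infinite_Set"
begin


lemma frac1: fixes a b c s t::real assumes "s\<noteq>0" "t\<noteq>0" "c\<noteq>0"
  shows "a/(s * t) - b/(c * s * t) = (a * c - b)/(c * s * t)"
  using assms by (simp add: field_simps)
lemma frac2: fixes a b c s t::real assumes "s\<noteq>0" "t\<noteq>0" "c\<noteq>0"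
  shows "b/(c * s * t) - a/(s * t) = (b - a * c)/(c * s * t)"
  using assms by (simp add: field_simps)

lemma alg1:
  fixes X Y D :: real
  assumes "0 < X" "0 < Y" "X + Y \<le> pi/2" "0 < D" "D \<le> pi/2"
  shows "(cos Y + cos X  *  cos Y)/(sin X  *  sin Y)
        - (cos X + cos D) * (cos Y + cos (X+Y))/((1+cos X) * sin X * sin Y) > 1"
proof -
  have sX: "sin X > 0" using assms by (intro sin_gt_zero) auto
  have sY: "sin Y > 0" using assms by (intro sin_gt_zero) auto
  have cX: "cos X > 0" using assms by (intro cos_gt_zero) auto
  have cY: "cos Y > 0" using assms by (intro cos_gt_zero) auto
  have cL: "cos (X+Y) \<ge> 0" using assms by (intro cos_ge_zero) auto
  have cD: "cos D < 1" using assms using cos_monotone_0_pi[of 0 D] by auto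
  have e: "cos (X+Y) = cos X  *  cos Y - sin X  *  sin Y" by (rule cos_add)
  have pos: "(1+cos X) * sin X * sin Y > 0" using sX sY cX by simp
  have "(cos Y + cos X  *  cos Y)/(sin X  *  sin Y)
        - (cos X + cos D) * (cos Y + cos (X+Y))/((1+cos X) * sin X * sin Y)
      = ((cos Y + cos X  *  cos Y) * (1+cos X) - (cos X + cos D) * (cos Y + cos (X+Y)))/((1+cos X) * sin X * sin Y)"
    using sX sY cX by (intro frac1 frac2) auto
  moreover have "(cos Y + cos X  *  cos Y) * (1+cos X) - (cos X + cos D) * (cos Y + cos (X+Y))
      = (1+cos X) * sin X * sin Y + (1 - cos D) * (cos Y + cos (X+Y))"
    unfolding e by (simp add: algebra_simps)
  moreover have "(1 - cos D) * (cos Y + cos (X+Y)) > 0" using cD cY cL by simp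
  ultimately show ?thesis using pos by (simp add: less_divide_eq)
qed

lemma alg2:
  fixes X Y D :: real
  assumes "0 < X" "0 < Y" "X + Y \<le> pi/2" "0 < D" "D \<le> pi/2"
  shows "(cos (X+Y) + cos X  *  cos Y)/(sin X  *  sin Y)
        - (cos X + cos X) * (cos Y + cos Y)/((1+cos D) * sin X * sin Y) < -1"
proof -
  have sX: "sin X > 0" using assms by (intro sin_gt_zero) auto
  have sY: "sin Y > 0" using assms by (intro sin_gt_zero) auto
  have cX: "cos X > 0" using assms by (intro cos_gt_zero) auto
  have cY: "cos Y > 0" using assms by (intro cos_gt_zero) auto
  have cD: "cos D < 1" using assms using cos_monotone_0_pi[of 0 D] by auto
  have cD0: "cos D \<ge> 0" using assms by (intro cos_ge_zero) auto
  have e: "cos (X+Y) = cos X  *  cos Y - sin X  *  sin Y" by (rule cos_add)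
  have pos: "(1+cos D) * sin X * sin Y > 0" using sX sY cD0 by (simp add: add_pos_nonneg)
  have "(cos (X+Y) + cos X  *  cos Y)/(sin X  *  sin Y)
        - (cos X + cos X) * (cos Y + cos Y)/((1+cos D) * sin X * sin Y)
      = ((cos (X+Y) + cos X  *  cos Y) * (1+cos D) - (cos X + cos X) * (cos Y + cos Y))/((1+cos D) * sin X * sin Y)"
    using sX sY cD0 by (intro frac1 frac2) auto
  moreover have "(cos (X+Y) + cos X  *  cos Y) * (1+cos D) - (cos X + cos X) * (cos Y + cos Y)
      = -((1+cos D) * sin X * sin Y) - 2 * cos X * cos Y * (1 - cos D)"
    unfolding e by (simp add: algebra_simps)
  moreover have "2 * cos X * cos Y * (1 - cos D) > 0" using cD cX cY by simp
  ultimately show ?thesis using pos by (simp add: divide_less_eq)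
qed

lemma alg3:
  fixes X Y D :: real
  assumes "0 < X" "0 < Y" "0 < D"
  shows "(cosh X + cosh D) * (cosh Y + cosh (X+Y))/((1+cosh X) * sinh X * sinh Y)
        - (cosh Y + cosh X  *  cosh Y)/(sinh X  *  sinh Y) > 1"
proof -
  have sX: "sinh X > 0" using assms by simp
  have sY: "sinh Y > 0" using assms by simp
  have cX: "cosh X > 0" by simp
  have cY: "cosh Y > 0" by simp
  have cL: "cosh (X+Y) > 0" by simp
  have cD: "cosh D > 1" using assms cosh_real_nonneg_less_iff[of 0 D] by simp
  have e: "cosh (X+Y) = cosh X  *  cosh Y + sinh X  *  sinh Y" by (rule cosh_add)
  have c1: "1 + cosh X > 0" using cosh_real_ge_1[of X] by linarith
  have pos: "(1+cosh X) * sinh X * sinh Y > 0" using sX sY c1 by (intro mult_pos_pos) auto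
  have "(cosh X + cosh D) * (cosh Y + cosh (X+Y))/((1+cosh X) * sinh X * sinh Y)
        - (cosh Y + cosh X  *  cosh Y)/(sinh X  *  sinh Y)
      = ((cosh X + cosh D) * (cosh Y + cosh (X+Y)) - (cosh Y + cosh X  *  cosh Y) * (1+cosh X))/((1+cosh X) * sinh X * sinh Y)"
    using sX sY c1 by (intro frac1 frac2) auto
  moreover have "(cosh X + cosh D) * (cosh Y + cosh (X+Y)) - (cosh Y + cosh X  *  cosh Y) * (1+cosh X)
      = (1+cosh X) * sinh X * sinh Y + (cosh D - 1) * (cosh Y + cosh (X+Y))"
    unfolding e by (simp add: algebra_simps)
  moreover have "(cosh D - 1) * (cosh Y + cosh (X+Y)) > 0" using cD cY cL by (intro mult_pos_pos add_pos_pos) auto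
  ultimately show ?thesis using pos by (simp add: less_divide_eq)
qed

lemma alg4:
  fixes X Y D :: real
  assumes "0 < X" "0 < Y" "0 < D"
  shows "(cosh X + cosh X) * (cosh Y + cosh Y)/((1+cosh D) * sinh X * sinh Y)
        - (cosh (X+Y) + cosh X  *  cosh Y)/(sinh X  *  sinh Y) < -1"
proof -
  have sX: "sinh X > 0" using assms by simp
  have sY: "sinh Y > 0" using assms by simp
  have cX: "cosh X > 0" by simp
  have cY: "cosh Y > 0" by simp
  have cD: "cosh D > 1" using assms cosh_real_nonneg_less_iff[of 0 D] by simp
  have e: "cosh (X+Y) = cosh X  *  cosh Y + sinh X  *  sinh Y" by (rule cosh_add)
  have pos: "(1+cosh D) * sinh X * sinh Y > 0" using sX sY cD by simp
  have "(cosh X + cosh X) * (cosh Y + cosh Y)/((1+cosh D) * sinh X * sinh Y)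
        - (cosh (X+Y) + cosh X  *  cosh Y)/(sinh X  *  sinh Y)
      = ((cosh X + cosh X) * (cosh Y + cosh Y) - (cosh (X+Y) + cosh X  *  cosh Y) * (1+cosh D))/((1+cosh D) * sinh X * sinh Y)"
    using sX sY cD by (intro frac1 frac2) auto
  moreover have "(cosh X + cosh X) * (cosh Y + cosh Y) - (cosh (X+Y) + cosh X  *  cosh Y) * (1+cosh D)
      = -((1+cosh D) * sinh X * sinh Y) - 2 * cosh X * cosh Y * (cosh D - 1)"
    unfolding e by (simp add: algebra_simps)
  moreover have "2 * cosh X * cosh Y * (cosh D - 1) > 0" using cD cX cY by simp
  ultimately show ?thesis using pos by (simp add: divide_less_eq)
qed


lemma ps_extend:
  assumes "v \<in> partition_sums \<gamma> 0 s" "s \<le> 1"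
  shows "v + dist (\<gamma> s) (\<gamma> 1) \<in> partition_sums \<gamma> 0 1"
proof -
  from assms(1) obtain t n where t: "v = (\<Sum>i<n. dist (\<gamma> (t i)) (\<gamma> (t (Suc i))))"
    "t 0 = 0" "t n = s" "\<forall>i<n. t i \<le> t (Suc i)"
    unfolding partition_sums_def by blast
  define t' where "t' i = (if i \<le> n then t i else 1)" for i
  have "(\<Sum>i<n. dist (\<gamma> (t' i)) (\<gamma> (t' (Suc i)))) = v"
    unfolding t(1) by (intro sum.cong) (auto simp: t'_def)
  then have "(\<Sum>i<Suc n. dist (\<gamma> (t' i)) (\<gamma> (t' (Suc i)))) = v + dist (\<gamma> s) (\<gamma> 1)"
    by (simp add: t'_def t(3))
  moreover have "t' 0 = 0" "t' (Suc n) = 1" using t by (auto simp: t'_def)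
  moreover have "\<forall>i<Suc n. t' i \<le> t' (Suc i)"
    using t assms(2) by (auto simp: t'_def less_Suc_eq)
  ultimately show ?thesis unfolding partition_sums_def mem_Collect_eq
    by (intro exI[of _ t'] exI[of _ "Suc n"]) simp
qed

lemma shortest_point:
  assumes sh: "shortest \<gamma> P Q" and s: "0 \<le> s" "s \<le> 1"
  shows "curve_length \<gamma> 0 s = dist P (\<gamma> s)" "dist P (\<gamma> s) + dist (\<gamma> s) Q = dist P Q"
proof -
  have bdd: "bdd_above (partition_sums \<gamma> 0 1)" and g0: "\<gamma> 0 = P" and g1: "\<gamma> 1 = Q"
    and len: "Sup (partition_sums \<gamma> 0 1) = dist P Q"
    using sh unfolding shortest_def rectifiable_curve_def curve_length_def by auto
  have up: "v \<le> dist P Q - dist (\<gamma> s) Q" if "v \<in> partition_sums \<gamma> 0 s" for v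
  proof -
    have "v + dist (\<gamma> s) (\<gamma> 1) \<le> Sup (partition_sums \<gamma> 0 1)"
      using cSup_upper[OF ps_extend[OF that s(2)] bdd] .
    then show ?thesis using len g1 by simp
  qed
  have mem: "dist P (\<gamma> s) \<in> partition_sums \<gamma> 0 s"
  proof -
    define t where "t i = (if i = 0 then 0 else s)" for i :: nat
    have "dist P (\<gamma> s) = (\<Sum>i<1. dist (\<gamma> (t i)) (\<gamma> (t (Suc i))))" "t 0 = 0" "t 1 = s"
      "\<forall>i<1. t i \<le> t (Suc i)" using s g0 by (auto simp: t_def)
    then show ?thesis unfolding partition_sums_def by blast
  qed
  have bdd2: "bdd_above (partition_sums \<gamma> 0 s)" using up by (intro bdd_aboveI) auto
  have a: "dist P (\<gamma> s) \<le> curve_length \<gamma> 0 s"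
    unfolding curve_length_def using cSup_upper[OF mem bdd2] .
  have b: "curve_length \<gamma> 0 s \<le> dist P Q - dist (\<gamma> s) Q"
    unfolding curve_length_def using mem up by (intro cSup_least) auto
  have c: "dist P Q \<le> dist P (\<gamma> s) + dist (\<gamma> s) Q" by (rule dist_triangle)
  show "curve_length \<gamma> 0 s = dist P (\<gamma> s)" "dist P (\<gamma> s) + dist (\<gamma> s) Q = dist P Q"
    using a b c by linarith+
qed

lemma reduced_point:
  assumes sh: "shortest \<gamma> P Q" and t: "0 \<le> t" "t \<le> 1"
  shows "dist P (reduced_param \<gamma> t) = t * dist P Q"
    "dist (reduced_param \<gamma> t) Q = (1 - t) * dist P Q"
proof -
  have cont: "continuous_on {0..1} \<gamma>" and g0: "\<gamma> 0 = P" and g1: "\<gamma> 1 = Q"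
    and len: "curve_length \<gamma> 0 1 = dist P Q"
    using sh unfolding shortest_def rectifiable_curve_def by auto
  have "continuous_on {0..1} (\<lambda>s. dist P (\<gamma> s))"
    by (intro continuous_on_dist continuous_on_const cont)
  moreover have "(\<lambda>s. dist P (\<gamma> s)) 0 \<le> t * dist P Q" "t * dist P Q \<le> (\<lambda>s. dist P (\<gamma> s)) 1"
    using g0 g1 t by (auto intro: mult_left_le_one_le)
  ultimately obtain s where s: "0 \<le> s" "s \<le> 1" "dist P (\<gamma> s) = t * dist P Q"
    using IVT'[of "\<lambda>s. dist P (\<gamma> s)" 0 "t * dist P Q" 1] by auto
  have ex: "\<exists>s. s \<in> {0..1} \<and> curve_length \<gamma> 0 s = t * curve_length \<gamma> 0 1"
    using s shortest_point(1)[OF sh s(1,2)] len by auto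
  define s0 where "s0 = (SOME s. s \<in> {0..1} \<and> curve_length \<gamma> 0 s = t * curve_length \<gamma> 0 1)"
  have s0: "s0 \<in> {0..1}" "curve_length \<gamma> 0 s0 = t * curve_length \<gamma> 0 1"
    using someI_ex[OF ex] unfolding s0_def by auto
  have rp: "reduced_param \<gamma> t = \<gamma> s0" unfolding reduced_param_def s0_def ..
  have 1: "dist P (\<gamma> s0) = t * dist P Q"
    using s0 shortest_point(1)[OF sh] len by auto
  have 2: "dist P (\<gamma> s0) + dist (\<gamma> s0) Q = dist P Q"
    using s0 shortest_point(2)[OF sh] by auto
  show "dist P (reduced_param \<gamma> t) = t * dist P Q"
    "dist (reduced_param \<gamma> t) Q = (1 - t) * dist P Q"
    using 1 2 unfolding rp by (auto simp: algebra_simps)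
qed


definition cqf :: "real \<Rightarrow> real \<Rightarrow> real \<Rightarrow> real \<Rightarrow> real \<Rightarrow> real \<Rightarrow> real \<Rightarrow> real" where
  "cqf K x y a b d f =
    (let k = sqrt \<bar>K\<bar> in
     if K > 0 then
       (cos (k * b) + cos (k * x) * cos (k * y)) / (sin (k * x) * sin (k * y))
       - (cos (k * x) + cos (k * d)) * (cos (k * y) + cos (k * f)) / ((1 + cos (k * a)) * sin (k * x) * sin (k * y))
     else
       (cosh (k * x) + cosh (k * d)) * (cosh (k * y) + cosh (k * f)) / ((1 + cosh (k * a)) * sinh (k * x) * sinh (k * y))
       - (cosh (k * b) + cosh (k * x) * cosh (k * y)) / (sinh (k * x) * sinh (k * y)))"

lemma cosq_cqf: "cosq K A P B Q = cqf K (dist A P) (dist B Q) (dist A B) (dist P Q) (dist P B) (dist A Q)"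
  by (simp add: cosq_def cqf_def Let_def)

lemma cqf_tendsto:
  assumes "xs \<longlonglongrightarrow> x" "ys \<longlonglongrightarrow> y" "as \<longlonglongrightarrow> a" "bs \<longlonglongrightarrow> b" "ds \<longlonglongrightarrow> d" "fs \<longlonglongrightarrow> f"
    and "K > 0 \<Longrightarrow> sin (sqrt \<bar>K\<bar> * x) \<noteq> 0 \<and> sin (sqrt \<bar>K\<bar> * y) \<noteq> 0 \<and> 1 + cos (sqrt \<bar>K\<bar> * a) \<noteq> 0"
    and "\<not> K > 0 \<Longrightarrow> sinh (sqrt \<bar>K\<bar> * x) \<noteq> 0 \<and> sinh (sqrt \<bar>K\<bar> * y) \<noteq> 0 \<and> 1 + cosh (sqrt \<bar>K\<bar> * a) \<noteq> 0"
  shows "(\<lambda>n. cqf K (xs n) (ys n) (as n) (bs n) (ds n) (fs n)) \<longlonglongrightarrow> cqf K x y a b d f"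
proof (cases "K > 0")
  case True
  then show ?thesis unfolding cqf_def Let_def using assms
    by (simp only: if_True) (intro tendsto_intros; simp)
next
  case False
  then show ?thesis unfolding cqf_def Let_def using assms
    by (simp only: if_False) (intro tendsto_intros; simp)
qed

lemma near:
  fixes f g h :: "nat \<Rightarrow> real"
  assumes "g \<longlonglongrightarrow> L" "h \<longlonglongrightarrow> 0" "\<And>n. \<bar>f n - g n\<bar> \<le> h n"
  shows "f \<longlonglongrightarrow> L"
proof -
  have "(\<lambda>n. f n - g n) \<longlonglongrightarrow> 0"
    by (rule Lim_null_comparison[OF _ assms(2)]) (simp add: assms(3))
  from tendsto_add[OF this assms(1)] show ?thesis by simp
qed

lemma dist_diff_le: "\<bar>dist a c - dist b c\<bar> \<le> dist a b"
  using dist_triangle[of a c b] dist_triangle[of b c a] by (simp add: dist_commute)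


lemma core_conv:
  fixes A B :: "'a::metric_space" and M N As Bs :: "nat \<Rightarrow> 'a" and t :: "nat \<Rightarrow> real"
  assumes K0: "K \<noteq> 0"
    and diam: "K > 0 \<Longrightarrow> \<forall>x y :: 'a. dist x y \<le> pi / (2 * sqrt K)"
    and cond: "one_sided_cosq_cond K TYPE('a)"
    and As: "As \<longlonglongrightarrow> A" and Bs: "Bs \<longlonglongrightarrow> B"
    and hM1: "\<And>n. dist A (M n) = t n * dist A B"
    and hM2: "\<And>n. dist (M n) B = (1 - t n) * dist A B"
    and hN1: "\<And>n. dist (As n) (N n) = t n * dist (As n) (Bs n)"
    and hN2: "\<And>n. dist (N n) (Bs n) = (1 - t n) * dist (As n) (Bs n)"
    and tl: "t \<longlonglongrightarrow> \<tau>" and dl: "(\<lambda>n. dist (M n) (N n)) \<longlonglongrightarrow> \<delta>" and dpos: "\<delta> > 0"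
  shows False
proof -
  define l where "l = dist A B"
  define k where "k = sqrt \<bar>K\<bar>"
  have kpos: "k > 0" using K0 by (simp add: k_def)
  have ln: "(\<lambda>n. dist (As n) (Bs n)) \<longlonglongrightarrow> l"
    unfolding l_def by (intro tendsto_dist As Bs)
  have L1: "(\<lambda>n. dist A (M n)) \<longlonglongrightarrow> \<tau> * l"
    unfolding hM1 l_def by (intro tendsto_intros tl)
  have L1': "(\<lambda>n. dist (M n) A) \<longlonglongrightarrow> \<tau> * l"
    using L1 by (simp add: dist_commute)
  have L2: "(\<lambda>n. dist (M n) B) \<longlonglongrightarrow> (1 - \<tau>) * l"
    unfolding hM2 l_def by (intro tendsto_intros tl)
  have dA: "(\<lambda>n. dist A (As n)) \<longlonglongrightarrow> 0"
    using tendsto_dist[OF tendsto_const As, of A] by simp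
  have dB: "(\<lambda>n. dist B (Bs n)) \<longlonglongrightarrow> 0"
    using tendsto_dist[OF tendsto_const Bs, of B] by simp
  have L3: "(\<lambda>n. dist A (N n)) \<longlonglongrightarrow> \<tau> * l"
  proof (rule near[OF _ dA])
    show "(\<lambda>n. dist (As n) (N n)) \<longlonglongrightarrow> \<tau> * l" unfolding hN1 by (intro tendsto_intros tl ln)
    show "\<bar>dist A (N n) - dist (As n) (N n)\<bar> \<le> dist A (As n)" for n by (rule dist_diff_le)
  qed
  have L4: "(\<lambda>n. dist (N n) B) \<longlonglongrightarrow> (1 - \<tau>) * l"
  proof (rule near[OF _ dB])
    show "(\<lambda>n. dist (N n) (Bs n)) \<longlonglongrightarrow> (1 - \<tau>) * l" unfolding hN2 by (intro tendsto_intros tl ln)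
    show "\<bar>dist (N n) B - dist (N n) (Bs n)\<bar> \<le> dist B (Bs n)" for n
      using dist_diff_le[of B "N n" "Bs n"] by (simp add: dist_commute)
  qed
  have "\<delta> \<le> \<tau> * l + \<tau> * l"
  proof (rule tendsto_le[OF _ tendsto_add[OF L1' L3] dl])
    show "\<forall>\<^sub>F n in sequentially. dist (M n) (N n) \<le> dist (M n) A + dist A (N n)"
      by (intro always_eventually allI dist_triangle)
  qed simp
  moreover have "\<delta> \<le> (1 - \<tau>) * l + (1 - \<tau>) * l"
  proof (rule tendsto_le[OF _ tendsto_add[OF L2 L4] dl])
    show "\<forall>\<^sub>F n in sequentially. dist (M n) (N n) \<le> dist (M n) B + dist (N n) B"
      using dist_triangle[of "M _" "N _" B] by (intro always_eventually allI) (simp add: dist_commute)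
  qed simp
  ultimately have p1: "\<tau> * l > 0" and p2: "(1 - \<tau>) * l > 0" using dpos by linarith+
  have lpos: "l \<ge> 0" unfolding l_def by simp
  have ev1: "\<forall>\<^sub>F n in sequentially. dist A (M n) > 0" using order_tendstoD(1)[OF L1 p1] .
  have ev2: "\<forall>\<^sub>F n in sequentially. dist (N n) B > 0" using order_tendstoD(1)[OF L4 p2] .
  define X where "X = k * (\<tau> * l)"
  define Y where "Y = k * ((1 - \<tau>) * l)"
  define D where "D = k * \<delta>"
  have XY: "X + Y = k * l" unfolding X_def Y_def by (simp add: algebra_simps)
  have Xp: "X > 0" "Y > 0" "D > 0" using kpos p1 p2 dpos by (simp_all add: X_def Y_def D_def)
  have bnd: "X + Y \<le> pi / 2 \<and> D \<le> pi / 2" if Kp: "K > 0"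
  proof -
    have dm: "\<forall>x y :: 'a. dist x y \<le> pi / (2 * k)" using diam[OF Kp] Kp by (simp add: k_def)
    have "l \<le> pi / (2 * k)" using dm unfolding l_def by blast
    moreover have "\<delta> \<le> pi / (2 * k)"
      using dm by (intro tendsto_upperbound[OF dl]) auto
    ultimately have "k * l \<le> pi / 2" "k * \<delta> \<le> pi / 2" using kpos
      by (auto simp: field_simps)
    then show ?thesis unfolding XY D_def by simp
  qed
  have adm: "dist u v < pi / sqrt K" if "K > 0" for u v :: 'a
  proof -
    have "dist u v \<le> pi / (2 * sqrt K)" using diam[OF that] by blast
    also have "\<dots> < pi / sqrt K" using that by (simp add: field_simps)
    finally show ?thesis .
  qed
  from cond show False
    unfolding one_sided_cosq_cond_def
  proof
    assume up: "upper_cosq_cond K TYPE('a)"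
    have ev: "\<forall>\<^sub>F n in sequentially.
      cqf K (dist A (M n)) (dist (N n) B) (dist A (N n)) (dist (M n) B) (dist (M n) (N n)) (dist A B) \<le> 1"
      using ev1 ev2
    proof eventually_elim
      case (elim n)
      then have "admissible_quad K A (M n) (N n) B"
        using adm by (auto simp: admissible_quad_def)
      then show ?case using up unfolding upper_cosq_cond_def cosq_cqf by blast
    qed
    have lim: "(\<lambda>n. cqf K (dist A (M n)) (dist (N n) B) (dist A (N n)) (dist (M n) B) (dist (M n) (N n)) (dist A B))
        \<longlonglongrightarrow> cqf K (\<tau> * l) ((1 - \<tau>) * l) (\<tau> * l) ((1 - \<tau>) * l) \<delta> l"
    proof (rule cqf_tendsto[OF L1 L4 L3 L2 dl])
      show "(\<lambda>n. dist A B) \<longlonglongrightarrow> l" unfolding l_def by simp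
      show "K > 0 \<Longrightarrow> sin (sqrt \<bar>K\<bar> * (\<tau> * l)) \<noteq> 0 \<and> sin (sqrt \<bar>K\<bar> * ((1 - \<tau>) * l)) \<noteq> 0
          \<and> 1 + cos (sqrt \<bar>K\<bar> * (\<tau> * l)) \<noteq> 0"
      proof -
        assume Kp: "K > 0"
        have "sin X > 0" "sin Y > 0" "cos X > 0" using bnd[OF Kp] Xp
          by (auto intro!: sin_gt_zero cos_gt_zero)
        then show ?thesis unfolding X_def Y_def k_def by simp
      qed
      show "\<not> K > 0 \<Longrightarrow> sinh (sqrt \<bar>K\<bar> * (\<tau> * l)) \<noteq> 0 \<and> sinh (sqrt \<bar>K\<bar> * ((1 - \<tau>) * l)) \<noteq> 0
          \<and> 1 + cosh (sqrt \<bar>K\<bar> * (\<tau> * l)) \<noteq> 0"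
      proof -
        have "sinh X > 0" "sinh Y > 0" "1 + cosh X > 0" using Xp cosh_real_ge_1[of X] by auto
        then show ?thesis unfolding X_def Y_def k_def using K0 p1 p2 by auto
      qed
    qed
    have le: "cqf K (\<tau> * l) ((1 - \<tau>) * l) (\<tau> * l) ((1 - \<tau>) * l) \<delta> l \<le> 1"
      by (rule tendsto_upperbound[OF lim ev]) simp
    have "cqf K (\<tau> * l) ((1 - \<tau>) * l) (\<tau> * l) ((1 - \<tau>) * l) \<delta> l > 1"
    proof (cases "K > 0")
      case True
      have "cqf K (\<tau> * l) ((1 - \<tau>) * l) (\<tau> * l) ((1 - \<tau>) * l) \<delta> l =
        (cos Y + cos X * cos Y)/(sin X * sin Y)
        - (cos X + cos D) * (cos Y + cos (X+Y))/((1+cos X) * sin X * sin Y)"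
        unfolding XY using True by (simp add: cqf_def Let_def X_def Y_def D_def k_def)
      then show ?thesis using alg1[OF Xp(1,2) _ Xp(3)] bnd[OF True] by simp
    next
      case False
      have "cqf K (\<tau> * l) ((1 - \<tau>) * l) (\<tau> * l) ((1 - \<tau>) * l) \<delta> l =
        (cosh X + cosh D) * (cosh Y + cosh (X+Y))/((1+cosh X) * sinh X * sinh Y)
        - (cosh Y + cosh X * cosh Y)/(sinh X * sinh Y)"
        unfolding XY using False by (simp add: cqf_def Let_def X_def Y_def D_def k_def)
      then show ?thesis using alg3[OF Xp] by simp
    qed
    with le show False by simp
  next
    assume lo: "lower_cosq_cond K TYPE('a)"
    have ev: "\<forall>\<^sub>F n in sequentially.
      cqf K (dist (M n) A) (dist (N n) B) (dist (M n) (N n)) (dist A B) (dist A (N n)) (dist (M n) B) \<ge> -1"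
      using ev1 ev2
    proof eventually_elim
      case (elim n)
      then have "admissible_quad K (M n) A (N n) B"
        using adm by (auto simp: admissible_quad_def dist_commute)
      then show ?case using lo unfolding lower_cosq_cond_def cosq_cqf by blast
    qed
    have lim: "(\<lambda>n. cqf K (dist (M n) A) (dist (N n) B) (dist (M n) (N n)) (dist A B) (dist A (N n)) (dist (M n) B))
        \<longlonglongrightarrow> cqf K (\<tau> * l) ((1 - \<tau>) * l) \<delta> l (\<tau> * l) ((1 - \<tau>) * l)"
    proof (rule cqf_tendsto[OF L1' L4 dl _ L3 L2])
      show "(\<lambda>n. dist A B) \<longlonglongrightarrow> l" unfolding l_def by simp
      show "K > 0 \<Longrightarrow> sin (sqrt \<bar>K\<bar> * (\<tau> * l)) \<noteq> 0 \<and> sin (sqrt \<bar>K\<bar> * ((1 - \<tau>) * l)) \<noteq> 0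
          \<and> 1 + cos (sqrt \<bar>K\<bar> * \<delta>) \<noteq> 0"
      proof -
        assume Kp: "K > 0"
        have "sin X > 0" "sin Y > 0" "cos D \<ge> 0" using bnd[OF Kp] Xp
          by (auto intro!: sin_gt_zero cos_ge_zero)
        then show ?thesis unfolding X_def Y_def D_def k_def by simp
      qed
      show "\<not> K > 0 \<Longrightarrow> sinh (sqrt \<bar>K\<bar> * (\<tau> * l)) \<noteq> 0 \<and> sinh (sqrt \<bar>K\<bar> * ((1 - \<tau>) * l)) \<noteq> 0
          \<and> 1 + cosh (sqrt \<bar>K\<bar> * \<delta>) \<noteq> 0"
      proof -
        have "sinh X > 0" "sinh Y > 0" "1 + cosh D > 0" using Xp cosh_real_ge_1[of D] by auto
        then show ?thesis unfolding X_def Y_def D_def k_def using K0 p1 p2 by auto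
      qed
    qed
    have ge: "cqf K (\<tau> * l) ((1 - \<tau>) * l) \<delta> l (\<tau> * l) ((1 - \<tau>) * l) \<ge> -1"
      by (rule tendsto_lowerbound[OF lim ev]) simp
    have "cqf K (\<tau> * l) ((1 - \<tau>) * l) \<delta> l (\<tau> * l) ((1 - \<tau>) * l) < -1"
    proof (cases "K > 0")
      case True
      have "cqf K (\<tau> * l) ((1 - \<tau>) * l) \<delta> l (\<tau> * l) ((1 - \<tau>) * l) =
        (cos (X+Y) + cos X * cos Y)/(sin X * sin Y)
        - (cos X + cos X) * (cos Y + cos Y)/((1+cos D) * sin X * sin Y)"
        unfolding XY using True by (simp add: cqf_def Let_def X_def Y_def D_def k_def)
      then show ?thesis using alg2[OF Xp(1,2) _ Xp(3)] bnd[OF True] by simp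
    next
      case False
      have "cqf K (\<tau> * l) ((1 - \<tau>) * l) \<delta> l (\<tau> * l) ((1 - \<tau>) * l) =
        (cosh X + cosh X) * (cosh Y + cosh Y)/((1+cosh D) * sinh X * sinh Y)
        - (cosh (X+Y) + cosh X * cosh Y)/(sinh X * sinh Y)"
        unfolding XY using False by (simp add: cqf_def Let_def X_def Y_def D_def k_def)
      then show ?thesis using alg4[OF Xp] by simp
    qed
    with ge show False by simp
  qed
qed


lemma core:
  fixes A B :: "'a::metric_space" and M N As Bs :: "nat \<Rightarrow> 'a" and t :: "nat \<Rightarrow> real"
  assumes K0: "K \<noteq> 0"
    and diam: "K > 0 \<Longrightarrow> \<forall>x y :: 'a. dist x y \<le> pi / (2 * sqrt K)"
    and cond: "one_sided_cosq_cond K TYPE('a)"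
    and As: "As \<longlonglongrightarrow> A" and Bs: "Bs \<longlonglongrightarrow> B"
    and hM1: "\<And>n. dist A (M n) = t n * dist A B"
    and hM2: "\<And>n. dist (M n) B = (1 - t n) * dist A B"
    and hN1: "\<And>n. dist (As n) (N n) = t n * dist (As n) (Bs n)"
    and hN2: "\<And>n. dist (N n) (Bs n) = (1 - t n) * dist (As n) (Bs n)"
    and t01: "\<And>n. t n \<in> {0..1}"
  shows "(\<lambda>n. dist (M n) (N n)) \<longlonglongrightarrow> 0"
proof (rule ccontr)
  define d where "d n = dist (M n) (N n)" for n
  assume "\<not> (\<lambda>n. dist (M n) (N n)) \<longlonglongrightarrow> 0"
  then obtain e where e: "e > 0" and fr: "\<forall>m. \<exists>n\<ge>m. e \<le> d n"
    unfolding LIMSEQ_iff d_def by (auto simp: not_less)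
  have "infinite {n. e \<le> d n}" using fr by (simp add: infinite_nat_iff_unbounded_le)
  then obtain r :: "nat \<Rightarrow> nat" where r: "strict_mono r" "\<And>n. e \<le> d (r n)"
    using infinite_enumerate by blast
  define h where "h n = dist A (As n) + dist (As n) (Bs n)" for n
  have "h \<longlonglongrightarrow> dist A A + dist A B" unfolding h_def by (intro tendsto_intros As Bs)
  then have "Bseq h" by (rule convergent_imp_Bseq[OF convergentI])
  then obtain C where C: "\<And>n. norm (h n) \<le> C" by (auto simp: Bseq_def)
  have dle: "d n \<le> dist A B + C" for n
  proof -
    have "d n \<le> dist (M n) A + dist A (N n)" unfolding d_def by (rule dist_triangle)
    also have "dist A (N n) \<le> dist A (As n) + dist (As n) (N n)" by (rule dist_triangle)
    also have "dist (As n) (N n) \<le> dist (As n) (Bs n)"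
      unfolding hN1 using t01[of n] by (auto intro: mult_left_le_one_le)
    also have "dist (M n) A \<le> dist A B"
      using hM1[of n] t01[of n] by (auto simp: dist_commute intro: mult_left_le_one_le)
    finally show ?thesis using C[of n] by (simp add: h_def)
  qed
  have "seq_compact ({0..1::real} \<times> {0..dist A B + C})"
    by (rule compact_imp_seq_compact, rule compact_Times) (rule compact_Icc)+
  moreover have "\<forall>j. (t (r j), d (r j)) \<in> {0..1} \<times> {0..dist A B + C}"
    using t01 dle by (auto simp: d_def)
  ultimately obtain lim s where s: "strict_mono (s :: nat \<Rightarrow> nat)"
    "((\<lambda>j. (t (r j), d (r j))) \<circ> s) \<longlonglongrightarrow> lim"
    by (rule seq_compactE) blast
  define q where "q = r \<circ> s"
  have q: "strict_mono q" unfolding q_def using r(1) s(1) by (rule strict_mono_o)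
  have tq: "(\<lambda>j. t (q j)) \<longlonglongrightarrow> fst lim" using tendsto_fst[OF s(2)] by (simp add: q_def o_def)
  have dq: "(\<lambda>j. dist (M (q j)) (N (q j))) \<longlonglongrightarrow> snd lim"
    using tendsto_snd[OF s(2)] by (simp add: q_def o_def d_def)
  have "e \<le> snd lim"
    using r(2) by (intro tendsto_lowerbound[OF dq]) (auto simp: q_def d_def)
  then have dpos: "snd lim > 0" using e by simp
  show False
  proof (rule core_conv[OF K0 diam cond _ _ _ _ _ _ tq dq dpos])
    show "(\<lambda>j. As (q j)) \<longlonglongrightarrow> A" using LIMSEQ_subseq_LIMSEQ[OF As q] by (simp add: o_def)
    show "(\<lambda>j. Bs (q j)) \<longlonglongrightarrow> B" using LIMSEQ_subseq_LIMSEQ[OF Bs q] by (simp add: o_def)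
  qed (use hM1 hM2 hN1 hN2 in auto)
qed

theorem lemma6p1:
  fixes K :: real
    and \<gamma> :: "real \<Rightarrow> 'a::metric_space" and A B :: 'a
    and \<gamma>s :: "nat \<Rightarrow> real \<Rightarrow> 'a" and As Bs :: "nat \<Rightarrow> 'a"
  assumes "K \<noteq> 0"
    and "K > 0 \<Longrightarrow> \<forall>x y :: 'a. dist x y \<le> pi / (2 * sqrt K)"
    and "one_sided_cosq_cond K TYPE('a)"
    and "shortest \<gamma> A B"
    and "\<And>n. shortest (\<gamma>s n) (As n) (Bs n)"
    and "As \<longlonglongrightarrow> A" and "Bs \<longlonglongrightarrow> B"
  shows "uniform_limit {0..1} (\<lambda>n. reduced_param (\<gamma>s n)) (reduced_param \<gamma>) sequentially"
  unfolding uniform_limit_iff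
proof (intro allI impI)
  fix e :: real assume e: "e > 0"
  define bad where "bad n x \<longleftrightarrow> x \<in> {0..1} \<and> \<not> dist (reduced_param (\<gamma>s n) x) (reduced_param \<gamma> x) < e"
    for n x
  define t where "t n = (if \<exists>x. bad n x then SOME x. bad n x else 0)" for n
  have tb: "bad n (t n)" if "\<exists>x. bad n x" for n
    using someI_ex[OF that] that by (simp add: t_def)
  have t01: "t n \<in> {0..1}" for n
    using tb[of n] by (cases "\<exists>x. bad n x") (auto simp: t_def bad_def)
  have lim: "(\<lambda>n. dist (reduced_param \<gamma> (t n)) (reduced_param (\<gamma>s n) (t n))) \<longlonglongrightarrow> 0"
  proof (rule core[OF assms(1,2,3,6,7)])
    show "dist A (reduced_param \<gamma> (t n)) = t n * dist A B" for n
      using reduced_point(1)[OF assms(4)] t01[of n] by auto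
    show "dist (reduced_param \<gamma> (t n)) B = (1 - t n) * dist A B" for n
      using reduced_point(2)[OF assms(4)] t01[of n] by auto
    show "dist (As n) (reduced_param (\<gamma>s n) (t n)) = t n * dist (As n) (Bs n)" for n
      using reduced_point(1)[OF assms(5)] t01[of n] by auto
    show "dist (reduced_param (\<gamma>s n) (t n)) (Bs n) = (1 - t n) * dist (As n) (Bs n)" for n
      using reduced_point(2)[OF assms(5)] t01[of n] by auto
  qed (use t01 in auto)
  have "\<forall>\<^sub>F n in sequentially. dist (reduced_param \<gamma> (t n)) (reduced_param (\<gamma>s n) (t n)) < e"
    using order_tendstoD(2)[OF lim e] .
  then show "\<forall>\<^sub>F n in sequentially. \<forall>x\<in>{0..1}. dist (reduced_param (\<gamma>s n) x) (reduced_param \<gamma> x) < e"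
  proof eventually_elim
    case (elim n)
    show ?case
    proof (rule ccontr)
      assume "\<not> ?case"
      then have "\<exists>x. bad n x" by (auto simp: bad_def)
      from tb[OF this] elim show False by (simp add: bad_def dist_commute)
    qed
  qed
qed

end
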